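(* Let $n\ge 1$, $V=\{0,1\}^n$, $\mu$ the uniform probability measure on $V$, and $\beta=\log_2(3/2)$. For every $A\subseteq V$, \[ \int h_A^\beta\, d\mu \;\ge\; 2\,\mu(A)\bigl(1-\mu(A)\bigr). \]
   Context: $Q_n$ is the Hamming cube with vertex set $V=\{0,1\}^n$, two vertices adjacent iff they differ in exactly one coordinate. For $T\subseteq V$ and $x\in V$, $d_T(x)$ denotes the number of neighbors of $x$ in $T$. For $S\subseteq V$, $h_S:V\to\mathbb N$ is defined by $h_S(x)=d_{V\setminus S}(x)$ if $x\in S$ and $h_S(x)=0$ if $x\notin S$. For $f:V\to\mathbb R$ and $X\subseteq V$, $\int_X f\,d\mu=\sum_{x\in X}f(x)\mu(x)$ and $\int=\int_V$. Here $0^\beta=0$. *)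

theory Defs
  imports Complex_Main
begin

definition hcube :: "nat \<Rightarrow> bool list set" where
  "hcube n = {xs. length xs = n}"

definition hadj :: "bool list \<Rightarrow> bool list \<Rightarrow> bool" where
  "hadj x y \<longleftrightarrow> length x = length y \<and> card {i. i < length x \<and> x ! i \<noteq> y ! i} = 1"

definition hdeg :: "nat \<Rightarrow> bool list set \<Rightarrow> bool list \<Rightarrow> nat" where
  "hdeg n T x = card {y \<in> hcube n. hadj x y \<and> y \<in> T}"

definition hfun :: "nat \<Rightarrow> bool list set \<Rightarrow> bool list \<Rightarrow> nat" where
  "hfun n S x = (if x \<in> S then hdeg n (hcube n - S) x else 0)"

definition umeas :: "nat \<Rightarrow> bool list set \<Rightarrow> real" where
  "umeas n A = real (card A) / 2 ^ n"

definition uint :: "nat \<Rightarrow> (bool list \<Rightarrow> real) \<Rightarrow> real" where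
  "uint n f = (\<Sum>x\<in>hcube n. f x) / 2 ^ n"

end

theory Submission
  imports Defs "HOL-Analysis.Convex"
begin

definition bt :: real where "bt = log 2 (3/2)"

lemma bt_pos: "0 < bt" unfolding bt_def by simp
lemma bt_lt1: "bt < 1"
proof -
  have "log 2 (3/2) < log 2 2" by (subst log_less_cancel_iff) auto
  thus ?thesis unfolding bt_def by simp
qed
lemma two_powr_bt: "2 powr bt = 3/2" unfolding bt_def by simp
lemma four_powr_bt: "4 powr bt = 9/4"
proof -
  have "(4::real) powr bt = (2*2) powr bt" by simp
  also have "\<dots> = 9/4" by (simp only: powr_mult two_powr_bt)
  finally show ?thesis .
qed

lemma bt_ge: "29/50 \<le> bt"
proof -
  have "(2 powr (29/50::real)) ^ 50 = 2 powr (real 50 * (29/50))"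
    by (rule powr_power) simp
  also have "\<dots> = 2 ^ 29" using powr_realpow[of 2 29] by simp
  finally have e: "(2 powr (29/50::real)) ^ 50 = 2^29" .
  have "(2::real)^29 \<le> (3/2)^50" by (simp add: power_divide)
  hence "(2 powr (29/50::real)) ^ Suc 49 \<le> (3/2) ^ Suc 49" using e by simp
  hence "2 powr (29/50::real) \<le> 3/2" by (rule power_le_imp_le_base) simp
  thus ?thesis unfolding bt_def by (subst le_log_iff) auto
qed

lemma three_powr_bt: "7/4 \<le> 3 powr bt"
proof -
  have "(3 powr (29/50::real)) ^ 50 = 3 powr (real 50 * (29/50))"
    by (rule powr_power) simp
  also have "\<dots> = 3 ^ 29" using powr_realpow[of 3 29] by simp
  finally have e: "(3 powr (29/50::real)) ^ 50 = 3^29" .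
  have "(7/4::real)^50 \<le> 3^29" by (simp add: power_divide)
  hence "(7/4) ^ Suc 49 \<le> (3 powr (29/50::real)) ^ Suc 49" using e by simp
  hence "7/4 \<le> 3 powr (29/50::real)" by (rule power_le_imp_le_base) simp
  also have "\<dots> \<le> 3 powr bt" using bt_ge by (intro powr_mono) auto
  finally show ?thesis .
qed

lemma young2:
  fixes e a b :: real
  assumes "0 \<le> e" "e \<le> 1" "0 \<le> a" "0 \<le> b"
  shows "a powr e * b powr (1-e) \<le> e*a + (1-e)*b"
proof (cases "a = 0 \<or> b = 0")
  case True
  then show ?thesis using assms by auto
next
  case False
  then show ?thesis using Youngs_inequality_0[of e "1-e" a b] assms by auto
qed

lemma young1:
  fixes e a :: real
  assumes "0 \<le> e" "e \<le> 1" "0 \<le> a"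
  shows "a powr e \<le> e*a + (1-e)"
  using young2[OF assms, of 1] by simp

lemma concave_bt:
  fixes t x y :: real
  assumes "0 \<le> t" "t \<le> 1" "0 \<le> x" "0 \<le> y"
  shows "t * x powr bt + (1-t) * y powr bt \<le> (t*x+(1-t)*y) powr bt"
proof (cases "t*x+(1-t)*y = 0")
  case True
  have "t*x = 0" "(1-t)*y = 0" using True assms
    by (smt (verit) mult_nonneg_nonneg)+
  then show ?thesis by auto
next
  case False
  define z where "z = t*x+(1-t)*y"
  have zp: "0 < z" using False assms unfolding z_def
    by (smt (verit) mult_nonneg_nonneg)
  have b0: "0 \<le> bt" "bt \<le> 1" using bt_pos bt_lt1 by auto
  have hx: "x powr bt = z powr bt * (x/z) powr bt" using zp by (simp add: powr_divide)
  have hy: "y powr bt = z powr bt * (y/z) powr bt" using zp by (simp add: powr_divide)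
  have ix: "(x/z) powr bt \<le> bt*(x/z) + (1-bt)" using young1[OF b0, of "x/z"] zp assms by simp
  have iy: "(y/z) powr bt \<le> bt*(y/z) + (1-bt)" using young1[OF b0, of "y/z"] zp assms by simp
  have "t * (x/z) powr bt + (1-t) * (y/z) powr bt \<le> t*(bt*(x/z) + (1-bt)) + (1-t)*(bt*(y/z) + (1-bt))"
    using ix iy assms by (intro add_mono mult_left_mono) auto
  also have "\<dots> = bt * (t*x+(1-t)*y)/z + (1-bt)" using zp by (simp add: field_simps)
  also have "\<dots> = 1" using zp unfolding z_def by simp
  finally have m: "t * (x/z) powr bt + (1-t) * (y/z) powr bt \<le> 1" .
  have "t * x powr bt + (1-t) * y powr bt = z powr bt * (t * (x/z) powr bt + (1-t) * (y/z) powr bt)"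
    by (simp add: hx hy algebra_simps)
  also have "\<dots> \<le> z powr bt * 1" using m by (intro mult_left_mono) auto
  finally show ?thesis unfolding z_def by simp
qed

lemma two_point:
  fixes p q r s :: nat
  assumes "p + q = r + s" "s \<le> p" "p \<le> r"
  shows "real r powr bt + real s powr bt \<le> real p powr bt + real q powr bt"
proof (cases "r = s")
  case True
  then have "p = r" "q = r" using assms by auto
  then show ?thesis using True by simp
next
  case False
  hence rs: "real s < real r" using assms by auto
  define t where "t = (real p - real s)/(real r - real s)"
  have t0: "0 \<le> t" "t \<le> 1" unfolding t_def using assms rs by (auto simp: field_simps)
  have "t*(real r - real s) = real p - real s" unfolding t_def using rs by simp
  hence pe: "real p = t * real r + (1-t) * real s" by (simp add: algebra_simps)
  have qe: "real q = (1-t) * real r + (1-(1-t)) * real s"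
  proof -
    have "real q = real r + real s - real p" using assms(1) by linarith
    then show ?thesis using pe by (simp add: algebra_simps)
  qed
  have "t * real r powr bt + (1-t) * real s powr bt \<le> real p powr bt"
    using concave_bt[OF t0, of "real r" "real s"] pe by simp
  moreover have "(1-t) * real r powr bt + (1-(1-t)) * real s powr bt \<le> real q powr bt"
    using concave_bt[of "1-t" "real r" "real s"] t0 qe by simp
  ultimately show ?thesis by (simp add: algebra_simps)
qed

lemma tangent:
  fixes u s :: real
  assumes "0 \<le> u" "0 \<le> s"
  shows "u powr bt * s powr (1-bt) + 1 \<le> (u+1) powr bt * (s+1) powr (1-bt)"
proof -
  have b0: "0 \<le> bt" "bt \<le> 1" using bt_pos bt_lt1 by auto
  have i1: "(u/(u+1)) powr bt * (s/(s+1)) powr (1-bt) \<le> bt*(u/(u+1)) + (1-bt)*(s/(s+1))"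
    using young2[OF b0, of "u/(u+1)" "s/(s+1)"] assms by simp
  have i2: "(1/(u+1)) powr bt * (1/(s+1)) powr (1-bt) \<le> bt*(1/(u+1)) + (1-bt)*(1/(s+1))"
    using young2[OF b0, of "1/(u+1)" "1/(s+1)"] assms by simp
  have "bt*(u/(u+1)) + (1-bt)*(s/(s+1)) + (bt*(1/(u+1)) + (1-bt)*(1/(s+1))) = 1"
  proof -
    have a1: "u/(u+1) + 1/(u+1) = 1" using assms by (simp add: field_simps)
    have a2: "s/(s+1) + 1/(s+1) = 1" using assms by (simp add: field_simps)
    have "bt*(u/(u+1)) + (1-bt)*(s/(s+1)) + (bt*(1/(u+1)) + (1-bt)*(1/(s+1)))
        = bt*(u/(u+1) + 1/(u+1)) + (1-bt)*(s/(s+1) + 1/(s+1))" by (simp add: algebra_simps)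
    then show ?thesis using a1 a2 by simp
  qed
  hence le1: "(u/(u+1)) powr bt * (s/(s+1)) powr (1-bt) + (1/(u+1)) powr bt * (1/(s+1)) powr (1-bt) \<le> 1"
    using i1 i2 by linarith
  have pu: "0 < (u+1) powr bt" "0 < (s+1) powr (1-bt)" using assms by auto
  have "u powr bt * s powr (1-bt) + 1 = ((u/(u+1)) powr bt * (s/(s+1)) powr (1-bt) + (1/(u+1)) powr bt * (1/(s+1)) powr (1-bt)) * ((u+1) powr bt * (s+1) powr (1-bt))"
    using pu by (simp add: powr_divide field_simps)
  also have "\<dots> \<le> 1 * ((u+1) powr bt * (s+1) powr (1-bt))"
    using le1 pu by (intro mult_right_mono) auto
  finally show ?thesis by simp
qed

lemma chord:
  fixes u :: nat
  shows "real u powr bt / 2 + 1 \<le> real (Suc u) powr bt"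
proof -
  have t3: "7/4 \<le> 3 powr bt" by (rule three_powr_bt)
  have t3u: "3 powr bt \<le> (4::real) powr bt" using bt_pos by (intro powr_mono2) auto
  consider "u = 0" | "u = 1" | "u = 2" | "u = 3" | "u \<ge> 4" by linarith
  then show ?thesis
  proof cases
    case 1 then show ?thesis by simp
  next
    case 2 then show ?thesis using two_powr_bt by simp
  next
    case 3 then show ?thesis using t3 two_powr_bt by (simp add: numeral_eq_Suc)
  next
    case 4 then show ?thesis using t3u four_powr_bt by simp
  next
    case 5
    have "(4::real) powr bt \<le> real u powr bt" using 5 bt_pos by (intro powr_mono2) auto
    moreover have "real u powr bt \<le> real (Suc u) powr bt" using bt_pos by (intro powr_mono2) auto
    ultimately show ?thesis using four_powr_bt by simp
  qed
qed

lemma pw_half: "(1/2) * real u powr bt + 1 \<le> real (Suc u) powr bt"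
  using chord[of u] by simp

lemma pw_one: "1 * real u powr bt + 0 \<le> real (Suc u) powr bt"
  using bt_pos by (simp add: powr_mono2)

lemma pw_34: "(3/4) * real u powr bt + 3/4 \<le> real (Suc u) powr bt"
proof -
  have "real u powr bt * 1 powr (1-bt) + 1 \<le> (real u+1) powr bt * (1+1) powr (1-bt)"
    by (rule tangent) auto
  moreover have "(2::real) powr (1-bt) = 4/3" by (simp add: powr_diff two_powr_bt)
  ultimately have h: "real u powr bt + 1 \<le> (real u+1) powr bt * (4/3)" by simp
  have e: "real (Suc u) = real u + 1" by simp
  from h show ?thesis by (simp only: e)
qed

lemma pow2_powr_bt: "((2::real)^k) powr bt = (3/2)^k"
proof -
  have "((2::real)^k) powr bt = (2 powr (real k)) powr bt" by (simp add: powr_realpow)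
  also have "\<dots> = 2 powr (real k * bt)" by (simp add: powr_powr)
  also have "\<dots> = (2 powr bt)^k" by (simp add: powr_power)
  finally show ?thesis by (simp add: two_powr_bt)
qed

lemma pw_k:
  assumes "k \<ge> 1"
  shows "((2^k-1)/(2^k-1+(1-bt))) * real u powr bt + (3/4)^k \<le> real (Suc u) powr bt"
proof -
  define s :: real where "s = 2^k - 1"
  define p where "p = 1 - bt"
  have p0: "0 \<le> p" "p \<le> 1" using bt_pos bt_lt1 unfolding p_def by auto
  have "(2::real)^1 \<le> 2^k" using assms by (intro power_increasing) auto
  hence s1: "1 \<le> s" unfolding s_def by simp
  have sp: "(s+1) powr p = (4/3)^k"
  proof -
    have "(s+1) powr p = (2^k) powr (1-bt)" unfolding s_def p_def by simp
    also have "\<dots> = 2^k / (3/2)^k" by (simp add: powr_diff pow2_powr_bt)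
    also have "\<dots> = (4/3)^k"
    proof -
      have "(4::real)^k = 2^k*2^k" by (simp flip: power_mult_distrib)
      then show ?thesis by (simp add: power_divide)
    qed
    finally show ?thesis .
  qed
  have bern: "((s+1)/s) powr p \<le> 1 + p/s"
    using young1[OF p0, of "(s+1)/s"] s1 by (simp add: field_simps)
  have "(s+1) powr p \<le> s powr p * ((s+p)/s)"
  proof -
    have "(s+1) powr p = s powr p * ((s+1)/s) powr p" using s1 by (simp add: powr_divide)
    also have "\<dots> \<le> s powr p * (1 + p/s)" using bern s1 by (intro mult_left_mono) auto
    also have "1 + p/s = (s+p)/s" using s1 by (simp add: field_simps)
    finally show ?thesis .
  qed
  hence h: "(4/3)^k \<le> s powr p * ((s+p)/s)" using sp by simp
  have sp2: "(4/3)^k * (s/(s+p)) \<le> s powr p"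
  proof -
    have "(4/3)^k * (s/(s+p)) \<le> s powr p * ((s+p)/s) * (s/(s+p))"
      using h s1 p0 by (intro mult_right_mono) auto
    also have "\<dots> = s powr p * (((s+p)/s) * (s/(s+p)))" by simp
    also have "((s+p)/s) * (s/(s+p)) = 1"
    proof -
      have "s \<noteq> 0" "s+p \<noteq> 0" using s1 p0 by auto
      then show ?thesis by simp
    qed
    finally show ?thesis by simp
  qed
  have tg: "real u powr bt * s powr p + 1 \<le> (real u+1) powr bt * (4/3)^k"
    using tangent[of "real u" s] s1 sp unfolding p_def by simp
  have "(4/3)^k * ((s/(s+p)) * real u powr bt + (3/4)^k) = real u powr bt * ((4/3)^k * (s/(s+p))) + 1"
    by (simp add: algebra_simps power_mult_distrib[symmetric])
  also have "\<dots> \<le> real u powr bt * s powr p + 1" using sp2 by (intro add_mono mult_left_mono) auto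
  also have "\<dots> \<le> (4/3)^k * real (Suc u) powr bt" using tg by (simp add: mult.commute add.commute)
  finally have "(4/3)^k * ((s/(s+p)) * real u powr bt + (3/4)^k) \<le> (4/3)^k * real (Suc u) powr bt" .
  hence "(s/(s+p)) * real u powr bt + (3/4)^k \<le> real (Suc u) powr bt"
    by (rule mult_left_le_imp_le) simp
  thus ?thesis unfolding s_def p_def .
qed

lemma exists_k:
  fixes d :: real
  assumes "0 < d" "d < 1/4"
  shows "\<exists>k\<ge>2. (3/4)^(Suc k)/2 \<le> d \<and> d \<le> (3/4)^k/2"
proof -
  obtain n where n: "(3/4::real)^n < 2*d" using real_arch_pow_inv[of "2*d" "3/4"] assms by auto
  define P where "P j \<longleftrightarrow> (3/4::real)^(Suc j)/2 \<le> d" for j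
  have "(3/4::real)^(Suc n) \<le> (3/4)^n" by (rule power_decreasing) auto
  hence Pn: "P n" using n unfolding P_def by linarith
  define k where "k = (LEAST j. P j)"
  have Pk: "P k" unfolding k_def using Pn by (rule LeastI)
  have nP0: "\<not> P 0" "\<not> P 1" using assms unfolding P_def by (auto simp: power2_eq_square)
  have k2: "k \<ge> 2"
  proof (rule ccontr)
    assume "\<not> k \<ge> 2"
    then have "k = 0 \<or> k = 1" by auto
    then show False using Pk nP0 by auto
  qed
  have "\<not> P (k-1)" using not_less_Least[of "k-1" P] k2 unfolding k_def[symmetric] by auto
  hence "d \<le> (3/4)^k/2" unfolding P_def using k2 by (simp add: Suc_diff_1)
  thus ?thesis using Pk k2 unfolding P_def by auto
qed

lemma analytic:
  fixes b c :: real
  assumes b0: "0 \<le> b" and bc: "b \<le> c" and c1: "c \<le> 1"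
  shows "\<exists>\<alpha> \<gamma>. 0 \<le> \<alpha> \<and> \<alpha> \<le> 1 \<and> (\<forall>u::nat. \<alpha> * real u powr bt + \<gamma> \<le> real (Suc u) powr bt)
     \<and> (b+c)*(2-b-c) \<le> 2*b*(1-b) + \<alpha>*(2*c*(1-c)) + \<gamma>*(c-b)"
proof -
  define d where "d = c - b"
  define K where "K = 2*c*(1-c)"
  have K0: "0 \<le> K" "K \<le> 1/2"
  proof -
    show "0 \<le> K" unfolding K_def using b0 bc c1 by (auto intro!: mult_nonneg_nonneg)
    have "0 \<le> (2*c-1)^2" by simp
    then show "K \<le> 1/2" unfolding K_def by (simp add: algebra_simps power2_eq_square)
  qed
  have red: "(b+c)*(2-b-c) \<le> 2*b*(1-b) + \<alpha>*K + \<gamma>*d"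
    if "d^2 + (1-\<alpha>)*K \<le> \<gamma>*d" for \<alpha> \<gamma>
  proof -
    have "(b+c)*(2-b-c) = 2*b*(1-b) + K + d^2" unfolding K_def d_def by (simp add: algebra_simps power2_eq_square)
    then show ?thesis using that by (simp add: algebra_simps)
  qed
  have d0: "0 \<le> d" unfolding d_def using bc by simp
  show ?thesis
  proof (cases "d = 0")
    case True
    have "(b+c)*(2-b-c) \<le> 2*b*(1-b) + 1*K + 0*d" using red[of 1 0] True by simp
    then show ?thesis using pw_one unfolding K_def d_def by (intro exI[of _ 1] exI[of _ 0]) auto
  next
    case dn0: False
    show ?thesis
    proof (cases "c*(1-c) \<le> d*(1-d)")
      case True
      have "d^2 + (1-1/2)*K \<le> 1*d" using True unfolding K_def by (simp add: algebra_simps power2_eq_square)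
      hence "(b+c)*(2-b-c) \<le> 2*b*(1-b) + (1/2)*K + 1*d" using red by blast
      then show ?thesis using pw_half unfolding K_def d_def by (intro exI[of _ "1/2"] exI[of _ 1]) auto
    next
      case False
      have dlt: "d < 1/2"
      proof (rule ccontr)
        assume "\<not> d < 1/2"
        hence "1/2 \<le> d" "d \<le> c" unfolding d_def using b0 by auto
        hence "(c-d)*(1-c-d) \<le> 0" by (intro mult_nonneg_nonpos) auto
        hence "c*(1-c) \<le> d*(1-d)" by (simp add: algebra_simps)
        thus False using False by simp
      qed
      have dpos: "0 < d" using d0 dn0 by simp
      show ?thesis
      proof (cases "1/4 \<le> d")
        case True
        have "(d-1/4)*(d-1/2) \<le> 0" using True dlt by (intro mult_nonneg_nonpos) auto
        hence "d^2 + (1-3/4)*K \<le> 3/4*d" using K0 by (simp add: algebra_simps power2_eq_square)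
        hence "(b+c)*(2-b-c) \<le> 2*b*(1-b) + (3/4)*K + (3/4)*d" using red by blast
        then show ?thesis using pw_34 unfolding K_def d_def by (intro exI[of _ "3/4"] exI[of _ "3/4"]) auto
      next
        case False
        then obtain k where k2: "k \<ge> 2" and kl: "(3/4)^(Suc k)/2 \<le> d" and ku: "d \<le> (3/4)^k/2"
          using exists_k[of d] dpos by auto
        define s :: real where "s = 2^k - 1"
        define p where "p = 1 - bt"
        define g :: real where "g = (3/4)^k"
        have p0: "0 \<le> p" "p \<le> 21/50" using bt_lt1 bt_ge unfolding p_def by auto
        have g0: "0 < g" unfolding g_def by simp
        have gl: "3*g/8 \<le> d" "d \<le> g/2" using kl ku unfolding g_def by auto
        have A: "15*g^2/64 \<le> g*d - d^2"
        proof -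
          have "0 \<le> (d - 3*g/8)*(g/2 - d)" using gl by (intro mult_nonneg_nonneg) auto
          moreover have "g*(3*g/8) \<le> g*d" using gl g0 by (intro mult_left_mono) auto
          moreover have "(d - 3*g/8)*(g/2 - d) = 7/8*(g*d) - d^2 - 3/16*g^2" by (simp add: field_simps power2_eq_square)
          moreover have "g*(3*g/8) = 3/8*g^2" by (simp add: power2_eq_square)
          ultimately show ?thesis by linarith
        qed
        have g2: "g^2 = (9/16)^k" unfolding g_def by (simp add: power_mult_distrib[symmetric] power2_eq_square flip: power_mult) 
        have "(9/8::real)^2 \<le> (9/8)^k" using k2 by (intro power_increasing) auto
        moreover have "(9/16::real)^k \<le> (9/16)^2" using k2 by (intro power_decreasing) auto
        moreover have "g^2 * s = (9/8)^k - (9/16)^k"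
        proof -
          have "g^2 * 2^k = (9/8)^k" unfolding g2 by (simp flip: power_mult_distrib)
          thus ?thesis unfolding s_def by (simp add: algebra_simps g2)
        qed
        ultimately have gs: "243/256 \<le> g^2 * s" by (simp add: power2_eq_square)
        have s1: "1 \<le> s"
        proof -
          have "(2::real)^1 \<le> 2^k" using k2 by (intro power_increasing) auto
          thus ?thesis unfolding s_def by simp
        qed
        have B: "(p/(s+p))*K \<le> 15*g^2/64"
        proof -
          have "(p/(s+p))*K \<le> (p/(s+p))*(1/2)" using K0 p0 s1 by (intro mult_left_mono) auto
          also have "\<dots> \<le> 15*g^2/64"
          proof -
            have "p*32 \<le> 15*(g^2*s)" using gs p0 by linarith
            also have "\<dots> \<le> 15*(g^2*(s+p))" using p0 g0 by (intro mult_left_mono) auto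
            finally have "p*32 \<le> 15*(g^2*(s+p))" .
            then show ?thesis using s1 p0 by (simp add: field_simps)
          qed
          finally show ?thesis .
        qed
        have one_minus: "1 - s/(s+p) = p/(s+p)" using s1 p0 by (simp add: field_simps)
        have "d^2 + (1 - s/(s+p))*K \<le> g*d" using A B unfolding one_minus by linarith
        hence "(b+c)*(2-b-c) \<le> 2*b*(1-b) + (s/(s+p))*K + g*d" using red by blast
        moreover have "0 \<le> s/(s+p)" "s/(s+p) \<le> 1" using s1 p0 by auto
        moreover have "\<forall>u::nat. (s/(s+p)) * real u powr bt + g \<le> real (Suc u) powr bt"
          using pw_k[of k] k2 unfolding s_def p_def g_def by auto
        ultimately show ?thesis unfolding K_def d_def by (intro exI[of _ "s/(s+p)"] exI[of _ g]) auto
      qed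
    qed
  qed
qed

definition nbr :: "nat \<Rightarrow> bool list \<Rightarrow> bool list set" where
  "nbr n x = {y \<in> hcube n. hadj x y}"

definition FF :: "nat \<Rightarrow> bool list set \<Rightarrow> real" where
  "FF n A = (\<Sum>x\<in>A. real (card (nbr n x - A)) powr bt)"

lemma hcube_eq: "hcube n = {xs. set xs \<subseteq> (UNIV::bool set) \<and> length xs = n}"
  unfolding hcube_def by auto

lemma finite_hcube: "finite (hcube n)"
  unfolding hcube_eq by (rule finite_lists_length_eq) simp

lemma card_hcube: "card (hcube n) = 2^n"
  unfolding hcube_eq using card_lists_length_eq[of "UNIV::bool set" n] by simp

lemma finite_nbr: "finite (nbr n x)"
  unfolding nbr_def using finite_hcube by simp

lemma hcube_Suc: "hcube (Suc n) = Cons False ` hcube n \<union> Cons True ` hcube n"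
proof
  show "hcube (Suc n) \<subseteq> Cons False ` hcube n \<union> Cons True ` hcube n"
  proof
    fix z assume "z \<in> hcube (Suc n)"
    then obtain a y where z: "z = a # y" "length y = n" unfolding hcube_def by (auto simp: length_Suc_conv)
    then show "z \<in> Cons False ` hcube n \<union> Cons True ` hcube n" unfolding hcube_def by (cases a) auto
  qed
qed (auto simp: hcube_def)

lemma hadj_Cons:
  assumes "length x = length y"
  shows "hadj (a#x) (b#y) \<longleftrightarrow> (a \<noteq> b \<and> x = y) \<or> (a = b \<and> hadj x y)"
proof -
  define D where "D = {j. j < length x \<and> x!j \<noteq> y!j}"
  have fD: "finite D" unfolding D_def by simp
  have eq: "{i. i < length (a#x) \<and> (a#x)!i \<noteq> (b#y)!i} = (if a \<noteq> b then {0} else {}) \<union> Suc ` D"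
  proof (rule set_eqI)
    fix i show "i \<in> {i. i < length (a#x) \<and> (a#x)!i \<noteq> (b#y)!i} \<longleftrightarrow> i \<in> (if a \<noteq> b then {0} else {}) \<union> Suc ` D"
      unfolding D_def by (cases i) auto
  qed
  have c: "card {i. i < length (a#x) \<and> (a#x)!i \<noteq> (b#y)!i} = (if a \<noteq> b then 1 else 0) + card D"
    unfolding eq using fD by (simp add: card_image)
  have D0: "card D = 0 \<longleftrightarrow> x = y"
  proof -
    have "card D = 0 \<longleftrightarrow> D = {}" using fD by simp
    also have "\<dots> \<longleftrightarrow> x = y" unfolding D_def using assms by (auto simp: list_eq_iff_nth_eq)
    finally show ?thesis .
  qed
  show ?thesis unfolding hadj_def using c D0 assms D_def by auto
qed

lemma nbr_Cons:
  assumes "length x = n"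
  shows "nbr (Suc n) (a#x) = insert ((\<not>a)#x) (Cons a ` nbr n x)"
proof (rule set_eqI)
  fix z
  show "z \<in> nbr (Suc n) (a#x) \<longleftrightarrow> z \<in> insert ((\<not>a)#x) (Cons a ` nbr n x)"
  proof
    assume "z \<in> nbr (Suc n) (a#x)"
    then have z: "z \<in> hcube (Suc n)" "hadj (a#x) z" unfolding nbr_def by auto
    then obtain b y where zy: "z = b # y" "length y = n" unfolding hcube_def by (auto simp: length_Suc_conv)
    have "(a \<noteq> b \<and> x = y) \<or> (a = b \<and> hadj x y)" using z(2) hadj_Cons[of x y a b] zy assms by simp
    then show "z \<in> insert ((\<not>a)#x) (Cons a ` nbr n x)"
      using zy unfolding nbr_def hcube_def by auto
  next
    assume "z \<in> insert ((\<not>a)#x) (Cons a ` nbr n x)"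
    then show "z \<in> nbr (Suc n) (a#x)"
      using assms hadj_Cons unfolding nbr_def hcube_def by auto
  qed
qed

lemma card_nbr_Cons:
  assumes "length x = n"
  shows "card (nbr (Suc n) (a#x) - A) = (if (\<not>a)#x \<in> A then 0 else 1) + card (nbr n x - {y. a#y \<in> A})"
proof -
  have eq: "nbr (Suc n) (a#x) - A = (if (\<not>a)#x \<in> A then {} else {(\<not>a)#x}) \<union> Cons a ` (nbr n x - {y. a#y \<in> A})"
    unfolding nbr_Cons[OF assms] by auto
  have fin: "finite (Cons a ` (nbr n x - {y. a#y \<in> A}))" using finite_nbr by simp
  have dis: "(if (\<not>a)#x \<in> A then {} else {(\<not>a)#x}) \<inter> Cons a ` (nbr n x - {y. a#y \<in> A}) = {}" by auto
  have "card (nbr (Suc n) (a#x) - A) = card (if (\<not>a)#x \<in> A then {} else {(\<not>a)#x}) + card (Cons a ` (nbr n x - {y. a#y \<in> A}))"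
    unfolding eq using fin dis by (subst card_Un_disjoint) auto
  also have "card (Cons a ` (nbr n x - {y. a#y \<in> A})) = card (nbr n x - {y. a#y \<in> A})"
    by (rule card_image) simp
  finally show ?thesis by simp
qed

lemma pointwise:
  fixes A0 A1 :: "bool list set" and \<alpha> \<gamma> :: real and N :: "bool list set"
  assumes fN: "finite N" and a1: "\<alpha> \<le> 1" and a0: "0 \<le> \<alpha>"
    and pw: "\<forall>u::nat. \<alpha> * real u powr bt + \<gamma> \<le> real (Suc u) powr bt"
    and xC: "x \<in> A0 \<union> A1"
  shows "(if x \<in> A0 then real ((if x \<in> A1 then 0 else 1) + card (N - A0)) powr bt else 0)
       + (if x \<in> A1 then real ((if x \<in> A0 then 0 else 1) + card (N - A1)) powr bt else 0)
     \<ge> (if x \<in> A0 \<inter> A1 then real (card (N - (A0 \<inter> A1))) powr bt else 0)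
       + \<alpha> * real (card (N - (A0 \<union> A1))) powr bt + (if x \<in> A0 \<inter> A1 then 0 else \<gamma>)"
proof -
  define p0 where "p0 = card (N - A0)"
  define p1 where "p1 = card (N - A1)"
  define r where "r = card (N - (A0 \<inter> A1))"
  define s where "s = card (N - (A0 \<union> A1))"
  have sum: "r + s = p0 + p1"
  proof -
    have "card ((N - A0) \<union> (N - A1)) + card ((N - A0) \<inter> (N - A1)) = card (N - A0) + card (N - A1)"
      using card_Un_Int[of "N - A0" "N - A1"] fN by simp
    moreover have "(N - A0) \<union> (N - A1) = N - (A0 \<inter> A1)" "(N - A0) \<inter> (N - A1) = N - (A0 \<union> A1)" by auto
    ultimately show ?thesis unfolding r_def s_def p0_def p1_def by simp
  qed
  have sp0: "s \<le> p0" "p0 \<le> r" "s \<le> p1" "p1 \<le> r" unfolding r_def s_def p0_def p1_def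
    using fN by (auto intro!: card_mono)
  have sb: "0 \<le> real s powr bt" by simp
  consider "x \<in> A0" "x \<in> A1" | "x \<in> A0" "x \<notin> A1" | "x \<notin> A0" "x \<in> A1" using xC by auto
  then show ?thesis
  proof cases
    case 1
    have "real r powr bt + real s powr bt \<le> real p0 powr bt + real p1 powr bt"
      using two_point[of p0 p1 r s] sum sp0 by simp
    moreover have "\<alpha> * real s powr bt \<le> real s powr bt" using mult_right_mono[OF a1 sb] by simp
    ultimately show ?thesis using 1 unfolding r_def s_def p0_def p1_def by simp
  next
    case 2
    have "\<alpha> * real s powr bt + \<gamma> \<le> real (Suc s) powr bt" using pw by blast
    also have "\<dots> \<le> real (1 + p0) powr bt" using sp0 bt_pos by (intro powr_mono2) auto
    finally show ?thesis using 2 unfolding r_def s_def p0_def p1_def by simp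
  next
    case 3
    have "\<alpha> * real s powr bt + \<gamma> \<le> real (Suc s) powr bt" using pw by blast
    also have "\<dots> \<le> real (1 + p1) powr bt" using sp0 bt_pos by (intro powr_mono2) auto
    finally show ?thesis using 3 unfolding r_def s_def p0_def p1_def by simp
  qed
qed

lemma FF_nonneg: "0 \<le> FF n A" unfolding FF_def by (intro sum_nonneg) simp

lemma main:
  "A \<subseteq> hcube n \<Longrightarrow> 2 * real (card A) * (2^n - real (card A)) \<le> 2^n * FF n A"
proof (induction n arbitrary: A)
  case 0
  have "hcube 0 = {[]}" unfolding hcube_def by auto
  then have "A = {} \<or> A = {[]}" using 0 by auto
  then show ?case using FF_nonneg[of 0 A] by auto
next
  case (Suc n A)
  define A0 where "A0 = {y. False # y \<in> A}"
  define A1 where "A1 = {y. True # y \<in> A}"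
  define B where "B = A0 \<inter> A1"
  define C where "C = A0 \<union> A1"
  define M :: real where "M = 2^n"
  have A0h: "A0 \<subseteq> hcube n" "A1 \<subseteq> hcube n" using Suc.prems unfolding A0_def A1_def hcube_def by auto
  have BC: "B \<subseteq> C" "C \<subseteq> hcube n" using A0h unfolding B_def C_def by auto
  have fin: "finite A0" "finite A1" "finite B" "finite C" using A0h BC finite_hcube[of n] by (meson finite_subset)+
  have Aeq: "A = Cons False ` A0 \<union> Cons True ` A1"
  proof (rule set_eqI)
    fix z show "z \<in> A \<longleftrightarrow> z \<in> Cons False ` A0 \<union> Cons True ` A1"
    proof
      assume "z \<in> A"
      then have "z \<in> hcube (Suc n)" using Suc.prems by auto
      then obtain a y where "z = a # y" unfolding hcube_def by (auto simp: length_Suc_conv)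
      then show "z \<in> Cons False ` A0 \<union> Cons True ` A1" using \<open>z \<in> A\<close> unfolding A0_def A1_def by (cases a) auto
    qed (auto simp: A0_def A1_def)
  qed
  have dis: "Cons False ` A0 \<inter> Cons True ` A1 = {}" by auto
  have cardA: "card A = card A0 + card A1"
    unfolding Aeq using fin dis by (simp add: card_Un_disjoint card_image)
  have cardBC: "card B + card C = card A0 + card A1"
    unfolding B_def C_def using fin card_Un_Int[of A0 A1] by simp
  define G0 where "G0 x = real ((if x \<in> A1 then 0 else 1) + card (nbr n x - A0)) powr bt" for x
  define G1 where "G1 x = real ((if x \<in> A0 then 0 else 1) + card (nbr n x - A1)) powr bt" for x
  have FFA: "FF (Suc n) A = (\<Sum>x\<in>A0. G0 x) + (\<Sum>x\<in>A1. G1 x)"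
  proof -
    have "FF (Suc n) A = (\<Sum>z\<in>Cons False ` A0. real (card (nbr (Suc n) z - A)) powr bt)
        + (\<Sum>z\<in>Cons True ` A1. real (card (nbr (Suc n) z - A)) powr bt)"
      unfolding FF_def by (subst (1) Aeq, rule sum.union_disjoint) (use fin dis in auto)
    also have "(\<Sum>z\<in>Cons False ` A0. real (card (nbr (Suc n) z - A)) powr bt) = (\<Sum>x\<in>A0. G0 x)"
    proof (subst sum.reindex, simp, rule sum.cong, simp)
      fix x assume "x \<in> A0"
      then have "length x = n" using A0h unfolding hcube_def by auto
      then show "((\<lambda>z. real (card (nbr (Suc n) z - A)) powr bt) \<circ> Cons False) x = G0 x"
        unfolding G0_def using card_nbr_Cons[of x n False A] unfolding A0_def A1_def by simp
    qed
    also have "(\<Sum>z\<in>Cons True ` A1. real (card (nbr (Suc n) z - A)) powr bt) = (\<Sum>x\<in>A1. G1 x)"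
    proof (subst sum.reindex, simp, rule sum.cong, simp)
      fix x assume "x \<in> A1"
      then have "length x = n" using A0h unfolding hcube_def by auto
      then show "((\<lambda>z. real (card (nbr (Suc n) z - A)) powr bt) \<circ> Cons True) x = G1 x"
        unfolding G1_def using card_nbr_Cons[of x n True A] unfolding A0_def A1_def by simp
    qed
    finally show ?thesis .
  qed
  have cB: "card B \<le> card C" using BC fin by (intro card_mono) auto
  have cC: "card C \<le> 2^n" using BC card_hcube finite_hcube card_mono by metis
  obtain \<alpha> \<gamma> where a0: "0 \<le> \<alpha>" and a1: "\<alpha> \<le> 1"
    and pw: "\<forall>u::nat. \<alpha> * real u powr bt + \<gamma> \<le> real (Suc u) powr bt"
    and an: "(card B/M + card C/M)*(2 - card B/M - card C/M) \<le> 2*(card B/M)*(1-card B/M) + \<alpha>*(2*(card C/M)*(1-card C/M)) + \<gamma>*(card C/M - card B/M)"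
    using analytic[of "card B/M" "card C/M"] cB cC unfolding M_def by (auto simp: divide_right_mono)
  have Mpos: "0 < M" unfolding M_def by simp
  define w where "w x = (if x \<in> A0 then G0 x else 0) + (if x \<in> A1 then G1 x else 0)" for x
  have sumw: "(\<Sum>x\<in>A0. G0 x) + (\<Sum>x\<in>A1. G1 x) = (\<Sum>x\<in>C. w x)"
  proof -
    have "(\<Sum>x\<in>C. w x) = (\<Sum>x\<in>C. if x \<in> A0 then G0 x else 0) + (\<Sum>x\<in>C. if x \<in> A1 then G1 x else 0)"
      unfolding w_def by (rule sum.distrib)
    also have "(\<Sum>x\<in>C. if x \<in> A0 then G0 x else 0) = (\<Sum>x\<in>A0. G0 x)"
      using fin unfolding C_def by (subst sum.inter_filter[symmetric]) (auto intro: sum.cong)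
    also have "(\<Sum>x\<in>C. if x \<in> A1 then G1 x else 0) = (\<Sum>x\<in>A1. G1 x)"
      using fin unfolding C_def by (subst sum.inter_filter[symmetric]) (auto intro: sum.cong)
    finally show ?thesis by simp
  qed
  define hB where "hB x = real (card (nbr n x - B)) powr bt" for x
  define hC where "hC x = real (card (nbr n x - C)) powr bt" for x
  have lower: "(\<Sum>x\<in>C. (if x \<in> B then hB x else 0) + \<alpha> * hC x + (if x \<in> B then 0 else \<gamma>)) \<le> (\<Sum>x\<in>C. w x)"
  proof (rule sum_mono)
    fix x assume "x \<in> C"
    then show "(if x \<in> B then hB x else 0) + \<alpha> * hC x + (if x \<in> B then 0 else \<gamma>) \<le> w x"
      using pointwise[of "nbr n x" \<alpha> \<gamma> x A0 A1] finite_nbr a0 a1 pw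
      unfolding w_def G0_def G1_def hB_def hC_def B_def C_def by simp
  qed
  have lsum: "(\<Sum>x\<in>C. (if x \<in> B then hB x else 0) + \<alpha> * hC x + (if x \<in> B then 0 else \<gamma>))
      = FF n B + \<alpha> * FF n C + \<gamma> * (real (card C) - real (card B))"
  proof -
    have e1: "(\<Sum>x\<in>C. if x \<in> B then hB x else 0) = FF n B"
      unfolding FF_def hB_def using fin BC by (subst sum.inter_filter[symmetric]) (auto intro: sum.cong)
    have e2: "(\<Sum>x\<in>C. \<alpha> * hC x) = \<alpha> * FF n C" unfolding FF_def hC_def by (simp add: sum_distrib_left)
    have e3: "(\<Sum>x\<in>C. if x \<in> B then 0 else \<gamma>) = \<gamma> * (real (card C) - real (card B))"
    proof -
      have "(\<Sum>x\<in>{x\<in>C. x \<notin> B}. \<gamma>) = (\<Sum>x\<in>C. if x \<notin> B then \<gamma> else 0)"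
        by (rule sum.inter_filter) (rule fin(4))
      hence "(\<Sum>x\<in>C. if x \<in> B then 0 else \<gamma>) = (\<Sum>x\<in>{x\<in>C. x \<notin> B}. \<gamma>)"
        by (simp add: if_not_P cong: if_cong) (smt (verit) sum.cong)
      also have "{x\<in>C. x \<notin> B} = C - B" by auto
      also have "(\<Sum>x\<in>C - B. \<gamma>) = \<gamma> * real (card (C - B))" by simp
      also have "card (C - B) = card C - card B" using BC fin by (simp add: card_Diff_subset)
      finally show ?thesis using cB by (simp add: of_nat_diff)
    qed
    show ?thesis by (simp add: sum.distrib e1 e2 e3)
  qed
  have IHB: "2 * real (card B) * (M - real (card B)) \<le> M * FF n B" using Suc.IH[of B] BC unfolding M_def by auto
  have IHC: "2 * real (card C) * (M - real (card C)) \<le> M * FF n C" using Suc.IH[of C] BC unfolding M_def by auto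
  define x where "x = real (card B)"
  define y where "y = real (card C)"
  have an2: "(x+y)*(2*M-x-y) \<le> 2*x*(M-x) + \<alpha>*(2*y*(M-y)) + \<gamma>*M*(y-x)"
  proof -
    have "(x+y)*(2*M-x-y) = M^2 * ((x/M + y/M)*(2 - x/M - y/M))" using Mpos by (simp add: field_simps power2_eq_square)
    also have "\<dots> \<le> M^2 * (2*(x/M)*(1-x/M) + \<alpha>*(2*(y/M)*(1-y/M)) + \<gamma>*(y/M - x/M))"
      using an Mpos unfolding x_def y_def by (intro mult_left_mono) auto
    also have "\<dots> = 2*x*(M-x) + \<alpha>*(2*y*(M-y)) + \<gamma>*M*(y-x)" using Mpos by (simp add: field_simps power2_eq_square)
    finally show ?thesis .
  qed
  have "\<alpha>*(2*y*(M-y)) \<le> \<alpha>*(M * FF n C)" using IHC a0 unfolding y_def by (intro mult_left_mono) auto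
  hence "(x+y)*(2*M-x-y) \<le> M * FF n B + M * (\<alpha> * FF n C) + M * (\<gamma> * (y - x))"
    using an2 IHB unfolding x_def by (simp add: algebra_simps)
  also have "\<dots> = M * (FF n B + \<alpha> * FF n C + \<gamma> * (y - x))" by (simp add: algebra_simps)
  also have "\<dots> \<le> M * FF (Suc n) A"
    using lower lsum sumw FFA Mpos unfolding x_def y_def by (intro mult_left_mono) auto
  finally have fin_ineq: "(x+y)*(2*M-x-y) \<le> M * FF (Suc n) A" .
  have "real (card A) = x + y" unfolding x_def y_def using cardA cardBC by simp
  moreover have "(2::real)^Suc n = 2*M" unfolding M_def by simp
  ultimately show ?case using fin_ineq by (simp add: algebra_simps)
qed

theorem theorem1p1:
  fixes n :: nat and A :: "bool list set"
  assumes "n \<ge> 1" and "A \<subseteq> hcube n"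
  shows "uint n (\<lambda>x. real (hfun n A x) powr (log 2 (3/2)))
           \<ge> 2 * umeas n A * (1 - umeas n A)"
proof -
  define N :: real where "N = 2^n"
  have Np: "0 < N" unfolding N_def by simp
  have hf: "real (hfun n A x) powr bt = (if x \<in> A then real (card (nbr n x - A)) powr bt else 0)" for x
  proof -
    have "{y \<in> hcube n. hadj x y \<and> y \<in> hcube n - A} = nbr n x - A" unfolding nbr_def by auto
    then show ?thesis unfolding hfun_def hdeg_def by simp
  qed
  have "(\<Sum>x\<in>hcube n. real (hfun n A x) powr bt) = FF n A"
  proof -
    have "(\<Sum>x\<in>hcube n. real (hfun n A x) powr bt) = (\<Sum>x\<in>hcube n. if x \<in> A then real (card (nbr n x - A)) powr bt else 0)"
      by (simp add: hf)
    also have "\<dots> = (\<Sum>x\<in>{x \<in> hcube n. x \<in> A}. real (card (nbr n x - A)) powr bt)"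
      by (rule sum.inter_filter[symmetric]) (rule finite_hcube)
    also have "{x \<in> hcube n. x \<in> A} = A" using assms by auto
    finally show ?thesis unfolding FF_def .
  qed
  hence U: "uint n (\<lambda>x. real (hfun n A x) powr (log 2 (3/2))) = FF n A / N"
    unfolding uint_def N_def bt_def by simp
  have m: "2 * real (card A) * (N - real (card A)) \<le> N * FF n A" using main[OF assms(2)] unfolding N_def .
  have "2 * umeas n A * (1 - umeas n A) = (2 * real (card A) * (N - real (card A))) / N^2"
    unfolding umeas_def N_def[symmetric] using Np by (simp add: field_simps power2_eq_square)
  also have "\<dots> \<le> (N * FF n A) / N^2" using m Np by (intro divide_right_mono) auto
  also have "\<dots> = FF n A / N" using Np by (simp add: power2_eq_square)
  finally show ?thesis unfolding U .
qed

end
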